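(* For every $j\in\{1,\dots,n\}$, \[ \left|\frac{\widehat f_{e_n}(Y_j)-\widehat f(Y_j)}{f_{e_n}(Y_j)}\right|\le2\left[\mathbf 1_{\{f(Y_j)<2e_n\}}+\frac{\big(\sup_{y\in\mathbb R}|\widehat f(y)-f(y)|\big)^2}{e_n^2}\right]. \]
   Context: $Y$ is a real random variable with density $f$, and $Y_1,\dots,Y_n$ are i.i.d. copies of $Y$. For a kernel $K:\mathbb R\to\mathbb R_+$ and bandwidth $h>0$, $\widehat f(y)=\frac1{nh}\sum_{i=1}^nK(\frac{Y_i-y}{h})$. $e_n>0$; $f_{e_n}=\max(f,e_n)$ and $\widehat f_{e_n}=\max(e_n,\widehat f)$. *)

theory Defs
  imports "HOL-Analysis.Analysis"
begin

definition kde :: "(real \<Rightarrow> real) \<Rightarrow> real \<Rightarrow> nat \<Rightarrow> (nat \<Rightarrow> real) \<Rightarrow> real \<Rightarrow> real" where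
  "kde K h n Y y = (1 / (real n * h)) * (\<Sum>i=1..n. K ((Y i - y) / h))"

end

theory Submission
  imports Defs
begin

lemma sq_ge1:
  fixes S :: ereal and d e :: real
  assumes "S \<ge> ereal d" "d > e" "e > 0"
  shows "1 \<le> S ^ 2 / ereal (e ^ 2)"
proof (cases S)
  case (real s)
  then have "s > e" using assms by simp
  then have "e^2 \<le> s^2" using assms by (intro power_mono) auto
  then have "1 \<le> s^2 / e^2" using assms by simp
  then show ?thesis using real assms by (simp add: power2_eq_square)
next
  case PInf
  then show ?thesis using assms by (simp add: power2_eq_square)
next
  case MInf
  then show ?thesis using assms by simp
qed

theorem lemma2:
  fixes f K :: "real \<Rightarrow> real" and Y :: "nat \<Rightarrow> real" and h e :: real and n j :: nat
  assumes f_nonneg: "\<forall>y. f y \<ge> 0"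
    and K_nonneg: "\<forall>u. K u \<ge> 0"
    and h_pos: "h > 0"
    and e_pos: "e > 0"
    and j: "j \<in> {1..n}"
  shows "ereal \<bar>(max e (kde K h n Y (Y j)) - kde K h n Y (Y j)) / max (f (Y j)) e\<bar>
         \<le> 2 * (ereal (if f (Y j) < 2 * e then 1 else 0)
                 + (SUP y. ereal \<bar>kde K h n Y y - f y\<bar>) ^ 2 / ereal (e ^ 2))"
proof -
  define g where "g = kde K h n Y (Y j)"
  define F where "F = f (Y j)"
  define S where "S = (SUP y. ereal \<bar>kde K h n Y y - f y\<bar>)"
  define x where "x = \<bar>(max e g - g) / max F e\<bar>"
  have g0: "g \<ge> 0" unfolding g_def kde_def using K_nonneg h_pos
    by (intro mult_nonneg_nonneg sum_nonneg) auto
  have F0: "F \<ge> 0" using f_nonneg F_def by simp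
  have Sd: "S \<ge> ereal \<bar>g - F\<bar>" unfolding S_def g_def F_def
    by (rule SUP_upper2[where i="Y j"]) auto
  have S0: "S \<ge> 0" using Sd by (meson abs_ge_zero order_trans ereal_less_eq(5) zero_ereal_def)
  have T0: "0 \<le> S ^ 2 / ereal (e ^ 2)" using S0 e_pos
    by (simp add: ereal_zero_le_0_iff)
  have x1: "x \<le> 1"
  proof -
    have "max F e \<ge> e" by simp
    have "\<bar>max e g - g\<bar> \<le> e" using g0 e_pos by auto
    hence "\<bar>max e g - g\<bar> \<le> max F e" by linarith
    thus ?thesis unfolding x_def using e_pos
      by (simp add: abs_div_pos divide_le_eq_1 abs_le_iff max_def)
  qed
  have main: "ereal x \<le> 2 * (ereal (if F < 2 * e then 1 else 0) + S ^ 2 / ereal (e ^ 2))"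
  proof (cases "g \<ge> e")
    case True
    then have "x = 0" unfolding x_def by simp
    moreover have "0 \<le> 2 * (ereal (if F < 2 * e then 1 else 0) + S ^ 2 / ereal (e ^ 2))"
      using T0 by (cases "S ^ 2 / ereal (e ^ 2)") auto
    ultimately show ?thesis by (simp add: zero_ereal_def)
  next
    case False
    show ?thesis
    proof (cases "F < 2 * e")
      case True
      have "ereal x \<le> 1" using x1 by simp
      also have "\<dots> \<le> 2 * (1 + S ^ 2 / ereal (e ^ 2))" using T0
        by (cases "S ^ 2 / ereal (e ^ 2)") auto
      finally have "ereal x \<le> 2 * (1 + S ^ 2 / ereal (e ^ 2))" .
      moreover have eq: "ereal (if F < 2 * e then 1 else 0) = 1" using True by simp
      ultimately show ?thesis by (subst eq)
    next
      case F2: False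
      have "\<bar>g - F\<bar> > e" using False F2 e_pos by auto
      then have "1 \<le> S ^ 2 / ereal (e ^ 2)" using sq_ge1 Sd e_pos by blast
      moreover have "ereal x \<le> 1" using x1 by simp
      ultimately have "ereal x \<le> S ^ 2 / ereal (e ^ 2)" by (rule order_trans[rotated])
      also have "\<dots> \<le> 2 * (ereal 0 + S ^ 2 / ereal (e ^ 2))" using T0
        by (cases "S ^ 2 / ereal (e ^ 2)") auto
      finally have "ereal x \<le> 2 * (ereal 0 + S ^ 2 / ereal (e ^ 2))" .
      moreover have eq: "ereal (if F < 2 * e then 1 else 0) = ereal 0" using F2 by simp
      ultimately show ?thesis by (subst eq)
    qed
  qed
  show ?thesis using main unfolding x_def g_def F_def S_def .
qed

end
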